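(* Let $W$ be a finite-dimensional irreducible $H'_n(m)$-module and $\alpha,\beta\in\mathbb C^n$. Then $(\pi_{\alpha,\beta},L(W))$ is an irreducible $A_n(m)\rtimes H_n(m)$-module.
   Context: $n=2k$, $\bar\Gamma=m_1\mathbb Z\oplus\dots\oplus m_n\mathbb Z$, $A_n(m)=\mathbb C[t_1^{\pm m_1},\dots,t_n^{\pm m_n}]$ with monomials $t^r$, $r\in\bar\Gamma$. $(\cdot,\cdot)$ is the standard bilinear form on $\mathbb C^n$, $\bar r=(r_{k+1},\dots,r_{2k},-r_1,\dots,-r_k)$, $d_i=t_i\partial_{t_i}$, $D(u,r)=\sum_iu_it^rd_i$. $H_n(m)=\mathrm{span}\{d_i,\ h_r=D(\bar r,r): r\in\bar\Gamma\}$, a Lie algebra of derivations of $A_n(m)$, and $A_n(m)\rtimes H_n(m)$ is the semidirect product with $A_n(m)$ abelian and $[D(u,r),t^s]=(u,s)t^{r+s}$. $I(\bar r,r)=D(\bar r,r)-D(\bar r,0)$ and $H'_n(m)=\mathrm{span}\{I(\bar r,r):r\in\bar\Gamma\}$, a Lie subalgebra of $H_n(m)$. For an $H'_n(m)$-module $W$ and $\alpha,\beta\in\mathbb C^n$, $L(W)=W\otimes A_n(m)$ with action $D(\bar r,r)(w\otimes t^s)=(I(\bar r,r)w)\otimes t^{r+s}+(\bar r,\beta+s)w\otimes t^{r+s}$ ($0\ne r$), $D(u,0)(w\otimes t^s)=(u,\alpha+s)w\otimes t^s$, $t^r(w\otimes t^s)=w\otimes t^{r+s}$; this module is denoted $(\pi_{\alpha,\beta},L(W))$.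 *)

theory Defs
  imports Complex_Main
begin

text \<open>Coordinates are indexed 0..n-1 (n = 2k); a lattice vector
  r in Z^n is a function nat => int vanishing at indices >= n.
  Vectors in C^n (alpha, beta, u) are functions nat => complex (only indices < n matter).\<close>

definition vadd :: "(nat \<Rightarrow> int) \<Rightarrow> (nat \<Rightarrow> int) \<Rightarrow> (nat \<Rightarrow> int)" where
  "vadd r s = (\<lambda>i. r i + s i)"

definition vsub :: "(nat \<Rightarrow> int) \<Rightarrow> (nat \<Rightarrow> int) \<Rightarrow> (nat \<Rightarrow> int)" where
  "vsub r s = (\<lambda>i. r i - s i)"

definition ci :: "(nat \<Rightarrow> int) \<Rightarrow> (nat \<Rightarrow> complex)" where
  "ci r = (\<lambda>i. of_int (r i))"

definition Gam :: "nat \<Rightarrow> (nat \<Rightarrow> int) \<Rightarrow> (nat \<Rightarrow> int) set" where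
  "Gam n m = {r. (\<forall>i<n. m i dvd r i) \<and> (\<forall>i\<ge>n. r i = 0)}"

definition vbar :: "nat \<Rightarrow> (nat \<Rightarrow> int) \<Rightarrow> (nat \<Rightarrow> int)" where
  "vbar k r = (\<lambda>i. if i < k then r (k + i) else if i < 2 * k then - r (i - k) else 0)"

definition bf :: "nat \<Rightarrow> (nat \<Rightarrow> complex) \<Rightarrow> (nat \<Rightarrow> complex) \<Rightarrow> complex" where
  "bf n u v = (\<Sum>i<n. u i * v i)"

definition unitv :: "nat \<Rightarrow> (nat \<Rightarrow> complex)" where
  "unitv i = (\<lambda>j. if j = i then 1 else 0)"

text \<open>H'_n(m) has basis I(r-bar,r), r in Gamma-bar minus 0 (and I(0,0) = 0), with
  [I_r, I_s] = (r-bar,s)(I_{r+s} - I_r - I_s).  A module structure on a complex vector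
  space W is given by the action rho r of I(r-bar,r) for r in Gamma-bar.\<close>
definition Hprime_module ::
  "nat \<Rightarrow> (nat \<Rightarrow> int) \<Rightarrow> (complex \<Rightarrow> 'w::ab_group_add \<Rightarrow> 'w) \<Rightarrow> ((nat \<Rightarrow> int) \<Rightarrow> 'w \<Rightarrow> 'w) \<Rightarrow> bool" where
  "Hprime_module k m scale \<rho> \<longleftrightarrow>
     vector_space scale \<and>
     (\<forall>r\<in>Gam (2*k) m. Vector_Spaces.linear scale scale (\<rho> r)) \<and>
     \<rho> (\<lambda>_. 0) = (\<lambda>_. 0) \<and>
     (\<forall>r\<in>Gam (2*k) m. \<forall>s\<in>Gam (2*k) m. \<forall>w.
        \<rho> r (\<rho> s w) - \<rho> s (\<rho> r w) =
        scale (bf (2*k) (ci (vbar k r)) (ci s)) (\<rho> (vadd r s) w - \<rho> r w - \<rho> s w))"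

definition finite_dim :: "(complex \<Rightarrow> 'w::ab_group_add \<Rightarrow> 'w) \<Rightarrow> bool" where
  "finite_dim scale \<longleftrightarrow> (\<exists>B. finite B \<and> module.span scale B = UNIV)"

definition irreducible_Hp ::
  "nat \<Rightarrow> (nat \<Rightarrow> int) \<Rightarrow> (complex \<Rightarrow> 'w::ab_group_add \<Rightarrow> 'w) \<Rightarrow> ((nat \<Rightarrow> int) \<Rightarrow> 'w \<Rightarrow> 'w) \<Rightarrow> bool" where
  "irreducible_Hp k m scale \<rho> \<longleftrightarrow>
     (\<exists>w::'w. w \<noteq> 0) \<and>
     (\<forall>U. module.subspace scale U \<and> (\<forall>r\<in>Gam (2*k) m. \<rho> r ` U \<subseteq> U)
            \<longrightarrow> U = {0} \<or> U = UNIV)"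

text \<open>W \<otimes> A_n(m) is identified with finitely supported functions Gamma-bar \<rightarrow> W:
  f corresponds to sum_s f(s) \<otimes> t^s.\<close>
definition LW :: "nat \<Rightarrow> (nat \<Rightarrow> int) \<Rightarrow> ((nat \<Rightarrow> int) \<Rightarrow> 'w::zero) set" where
  "LW n m = {f. finite {s. f s \<noteq> 0} \<and> {s. f s \<noteq> 0} \<subseteq> Gam n m}"

definition fadd :: "('a \<Rightarrow> 'w::plus) \<Rightarrow> ('a \<Rightarrow> 'w) \<Rightarrow> ('a \<Rightarrow> 'w)" where
  "fadd f g = (\<lambda>s. f s + g s)"

definition fsub :: "('a \<Rightarrow> 'w::minus) \<Rightarrow> ('a \<Rightarrow> 'w) \<Rightarrow> ('a \<Rightarrow> 'w)" where
  "fsub f g = (\<lambda>s. f s - g s)"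

definition fscale :: "(complex \<Rightarrow> 'w \<Rightarrow> 'w) \<Rightarrow> complex \<Rightarrow> ('a \<Rightarrow> 'w) \<Rightarrow> ('a \<Rightarrow> 'w)" where
  "fscale scale c f = (\<lambda>s. scale c (f s))"

text \<open>Action of t^r: w \<otimes> t^s \<mapsto> w \<otimes> t^{r+s}.\<close>
definition tact :: "(nat \<Rightarrow> int) \<Rightarrow> ((nat \<Rightarrow> int) \<Rightarrow> 'w) \<Rightarrow> ((nat \<Rightarrow> int) \<Rightarrow> 'w)" where
  "tact r f = (\<lambda>s. f (vsub s r))"

text \<open>Action of D(u,0): w \<otimes> t^s \<mapsto> (u, alpha + s) w \<otimes> t^s.\<close>
definition dact :: "(complex \<Rightarrow> 'w \<Rightarrow> 'w) \<Rightarrow> nat \<Rightarrow> (nat \<Rightarrow> complex) \<Rightarrow> (nat \<Rightarrow> complex)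
     \<Rightarrow> ((nat \<Rightarrow> int) \<Rightarrow> 'w) \<Rightarrow> ((nat \<Rightarrow> int) \<Rightarrow> 'w)" where
  "dact scale n \<alpha> u f = (\<lambda>s. scale (bf n u (\<lambda>i. \<alpha> i + of_int (s i))) (f s))"

text \<open>Action of h_r = D(r-bar,r), r \<noteq> 0:
  w \<otimes> t^s \<mapsto> (I(r-bar,r) w) \<otimes> t^{r+s} + (r-bar, beta + s) w \<otimes> t^{r+s};  h_0 = 0.\<close>
definition hact :: "(complex \<Rightarrow> 'w::ab_group_add \<Rightarrow> 'w) \<Rightarrow> nat \<Rightarrow> ((nat \<Rightarrow> int) \<Rightarrow> 'w \<Rightarrow> 'w)
     \<Rightarrow> (nat \<Rightarrow> complex) \<Rightarrow> (nat \<Rightarrow> int) \<Rightarrow> ((nat \<Rightarrow> int) \<Rightarrow> 'w) \<Rightarrow> ((nat \<Rightarrow> int) \<Rightarrow> 'w)" where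
  "hact scale k \<rho> \<beta> r f =
     (if r = (\<lambda>_. 0) then (\<lambda>_. 0)
      else (\<lambda>s. \<rho> r (f (vsub s r))
              + scale (bf (2*k) (ci (vbar k r)) (\<lambda>i. \<beta> i + of_int (vsub s r i))) (f (vsub s r))))"

text \<open>Module over A_n(m) \<rtimes> H_n(m): this Lie algebra has basis t^r (r in Gamma-bar),
  d_i (i < n), h_r (r in Gamma-bar minus 0), with brackets
  [t^r,t^s] = 0, [d_i,t^s] = s_i t^s, [h_r,t^s] = (r-bar,s) t^{r+s},
  [d_i,d_j] = 0, [d_i,h_r] = r_i h_r, [h_r,h_s] = (r-bar,s) h_{r+s} (h_0 = 0).\<close>
definition lin_op :: "(complex \<Rightarrow> 'w::ab_group_add \<Rightarrow> 'w) \<Rightarrow> ('a \<Rightarrow> 'w) set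
     \<Rightarrow> (('a \<Rightarrow> 'w) \<Rightarrow> ('a \<Rightarrow> 'w)) \<Rightarrow> bool" where
  "lin_op scale C A \<longleftrightarrow> (\<forall>f\<in>C. A f \<in> C) \<and>
     (\<forall>f\<in>C. \<forall>g\<in>C. A (fadd f g) = fadd (A f) (A g)) \<and>
     (\<forall>c. \<forall>f\<in>C. A (fscale scale c f) = fscale scale c (A f))"

definition AH_module ::
  "nat \<Rightarrow> (nat \<Rightarrow> int) \<Rightarrow> (complex \<Rightarrow> 'w::ab_group_add \<Rightarrow> 'w) \<Rightarrow> ((nat \<Rightarrow> int) \<Rightarrow> 'w \<Rightarrow> 'w)
     \<Rightarrow> (nat \<Rightarrow> complex) \<Rightarrow> (nat \<Rightarrow> complex) \<Rightarrow> bool" where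
  "AH_module k m scale \<rho> \<alpha> \<beta> \<longleftrightarrow>
    (let n = 2*k; C = LW n m; G = Gam n m;
         T = tact; D = (\<lambda>i. dact scale n \<alpha> (unitv i)); H = hact scale k \<rho> \<beta>;
         pr = (\<lambda>r s. bf n (ci (vbar k r)) (ci s)) in
      (\<forall>r\<in>G. lin_op scale C (T r)) \<and> (\<forall>i<n. lin_op scale C (D i)) \<and>
      (\<forall>r\<in>G. lin_op scale C (H r)) \<and>
      (\<forall>f\<in>C. \<forall>r\<in>G. \<forall>s\<in>G. \<forall>i<n. \<forall>j<n.
         T r (T s f) = T s (T r f) \<and>
         fsub (D i (T s f)) (T s (D i f)) = fscale scale (of_int (s i)) (T s f) \<and>
         fsub (H r (T s f)) (T s (H r f)) = fscale scale (pr r s) (T (vadd r s) f) \<and>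
         D i (D j f) = D j (D i f) \<and>
         fsub (D i (H r f)) (H r (D i f)) = fscale scale (of_int (r i)) (H r f) \<and>
         fsub (H r (H s f)) (H s (H r f)) = fscale scale (pr r s) (H (vadd r s) f)))"

definition irreducible_AH ::
  "nat \<Rightarrow> (nat \<Rightarrow> int) \<Rightarrow> (complex \<Rightarrow> 'w::ab_group_add \<Rightarrow> 'w) \<Rightarrow> ((nat \<Rightarrow> int) \<Rightarrow> 'w \<Rightarrow> 'w)
     \<Rightarrow> (nat \<Rightarrow> complex) \<Rightarrow> (nat \<Rightarrow> complex) \<Rightarrow> bool" where
  "irreducible_AH k m scale \<rho> \<alpha> \<beta> \<longleftrightarrow>
    (let n = 2*k; C = LW n m; G = Gam n m; z = (\<lambda>_. 0) in
      C \<noteq> {z} \<and>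
      (\<forall>U. U \<subseteq> C \<and> z \<in> U \<and> (\<forall>f\<in>U. \<forall>g\<in>U. fadd f g \<in> U) \<and>
           (\<forall>c. \<forall>f\<in>U. fscale scale c f \<in> U) \<and>
           (\<forall>r\<in>G. tact r ` U \<subseteq> U) \<and>
           (\<forall>i<n. dact scale n \<alpha> (unitv i) ` U \<subseteq> U) \<and>
           (\<forall>r\<in>G. hact scale k \<rho> \<beta> r ` U \<subseteq> U)
         \<longrightarrow> U = {z} \<or> U = C))"

end

theory Submission
  imports Defs
begin

lemma sum_split_nat: "(\<Sum>i<(a::nat)+b. f i) = (\<Sum>i<a. f i) + (\<Sum>i<b. f (a+i))"
  by (induction b) (simp_all add: add_ac)

lemma bf_vbar_expl: "bf (2*k) (ci (vbar k r)) v =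
   (\<Sum>i<k. of_int (r (k+i)) * v i) - (\<Sum>i<k. of_int (r i) * v (k+i))"
proof -
  have "bf (2*k) (ci (vbar k r)) v = (\<Sum>i<k+k. ci (vbar k r) i * v i)"
    by (simp add: bf_def mult_2)
  also have "\<dots> = (\<Sum>i<k. ci (vbar k r) i * v i) + (\<Sum>i<k. ci (vbar k r) (k+i) * v (k+i))"
    by (rule sum_split_nat)
  also have "(\<Sum>i<k. ci (vbar k r) i * v i) = (\<Sum>i<k. of_int (r (k+i)) * v i)"
    by (rule sum.cong) (auto simp: ci_def vbar_def)
  also have "(\<Sum>i<k. ci (vbar k r) (k+i) * v (k+i)) = - (\<Sum>i<k. of_int (r i) * v (k+i))"
    by (simp add: sum_negf[symmetric] ci_def vbar_def)
  finally show ?thesis by simp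
qed

lemma bf_skew: "bf (2*k) (ci (vbar k s)) (ci r) = - bf (2*k) (ci (vbar k r)) (ci s)"
  unfolding bf_vbar_expl by (simp add: ci_def mult.commute)

lemma bf_self[simp]: "bf (2*k) (ci (vbar k r)) (ci r) = 0"
  using bf_skew[of k r r] by simp

lemma bf_plus[simp]: "bf n u (\<lambda>i. a i + of_int (y i)) = bf n u a + bf n u (ci y)"
  by (simp add: bf_def ci_def distrib_left sum.distrib)

lemma bf_vsub[simp]: "bf n u (ci (vsub y r)) = bf n u (ci y) - bf n u (ci r)"
  by (simp add: bf_def ci_def vsub_def right_diff_distrib sum_subtractf)

lemma bf_vadd[simp]: "bf n u (ci (vadd y r)) = bf n u (ci y) + bf n u (ci r)"
  by (simp add: bf_def ci_def vadd_def distrib_left sum.distrib)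

lemma bf_vbar_add[simp]: "bf n (ci (vbar k (vadd r s))) v = bf n (ci (vbar k r)) v + bf n (ci (vbar k s)) v"
  unfolding bf_def sum.distrib[symmetric] by (rule sum.cong) (auto simp: ci_def vbar_def vadd_def algebra_simps)

lemma bf_vbar0[simp]: "bf n (ci (vbar k (\<lambda>_. 0))) v = 0"
  unfolding bf_def by (rule sum.neutral) (auto simp: ci_def vbar_def)

lemma bf_unitv: "bf n (unitv i) v = v i" if "i < n"
proof -
  have "bf n (unitv i) v = (\<Sum>j<n. if j = i then v j else 0)"
    unfolding bf_def by (rule sum.cong) (auto simp: unitv_def)
  thus ?thesis using that by simp
qed

lemma vsub_vsub_comm: "vsub (vsub x s) r = vsub (vsub x r) s"
  by (auto simp: vsub_def)
lemma vsub_vadd: "vsub x (vadd r s) = vsub (vsub x r) s"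
  by (auto simp: vsub_def vadd_def)

lemma Gam_add: "r \<in> Gam n m \<Longrightarrow> s \<in> Gam n m \<Longrightarrow> vadd r s \<in> Gam n m"
  by (auto simp: Gam_def vadd_def)
lemma Gam_sub: "r \<in> Gam n m \<Longrightarrow> s \<in> Gam n m \<Longrightarrow> vsub r s \<in> Gam n m"
  by (auto simp: Gam_def vsub_def)
lemma Gam_neg: "r \<in> Gam n m \<Longrightarrow> (\<lambda>i. - r i) \<in> Gam n m"
  by (auto simp: Gam_def)
lemma Gam_0: "(\<lambda>_. 0) \<in> Gam n m"
  by (auto simp: Gam_def)

locale cvs =
  fixes scale :: "complex \<Rightarrow> 'w::ab_group_add \<Rightarrow> 'w"
  assumes vs: "vector_space scale"
begin
sublocale vector_space scale by (rule vs)
end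

locale hset = cvs scale for scale :: "complex \<Rightarrow> 'w::ab_group_add \<Rightarrow> 'w" +
  fixes k :: nat and m :: "nat \<Rightarrow> int" and \<rho> :: "(nat \<Rightarrow> int) \<Rightarrow> 'w \<Rightarrow> 'w"
  assumes lin: "r \<in> Gam (2*k) m \<Longrightarrow> \<rho> r (x + y) = \<rho> r x + \<rho> r y"
    and lins: "r \<in> Gam (2*k) m \<Longrightarrow> \<rho> r (scale c x) = scale c (\<rho> r x)"
    and rho0: "\<rho> (\<lambda>_. 0) = (\<lambda>_. 0)"
    and comm: "r \<in> Gam (2*k) m \<Longrightarrow> s \<in> Gam (2*k) m \<Longrightarrow>
        \<rho> r (\<rho> s w) - \<rho> s (\<rho> r w) =
        scale (bf (2*k) (ci (vbar k r)) (ci s)) (\<rho> (vadd r s) w - \<rho> r w - \<rho> s w)"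
begin

lemma rz[simp]: "r \<in> Gam (2*k) m \<Longrightarrow> \<rho> r 0 = 0"
  using lin[of r 0 0] by simp

lemma rdiff: "r \<in> Gam (2*k) m \<Longrightarrow> \<rho> r (x - y) = \<rho> r x - \<rho> r y"
  using lin[of r "x - y" y] by (simp add: algebra_simps)

lemma hact0[simp]: "hact scale k \<rho> \<beta> (\<lambda>_. 0) f = (\<lambda>_. 0)"
  by (simp add: hact_def)

lemma hact_ne: "r \<noteq> (\<lambda>_. 0) \<Longrightarrow> hact scale k \<rho> \<beta> r f x =
   \<rho> r (f (vsub x r)) + scale (bf (2*k) (ci (vbar k r)) (\<lambda>i. \<beta> i + of_int (vsub x r i))) (f (vsub x r))"
  by (simp add: hact_def)

lemma hact_zero_fun[simp]: "r \<in> Gam (2*k) m \<Longrightarrow> hact scale k \<rho> \<beta> r (\<lambda>_. 0) = (\<lambda>_. 0)"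
  by (auto simp: hact_def)

lemma HH: assumes r: "r \<in> Gam (2*k) m" and s: "s \<in> Gam (2*k) m"
  shows "fsub (hact scale k \<rho> \<beta> r (hact scale k \<rho> \<beta> s f)) (hact scale k \<rho> \<beta> s (hact scale k \<rho> \<beta> r f))
     = fscale scale (bf (2*k) (ci (vbar k r)) (ci s)) (hact scale k \<rho> \<beta> (vadd r s) f)"
proof (cases "r = (\<lambda>_. 0) \<or> s = (\<lambda>_. 0)")
  case True
  have c0: "bf (2*k) (ci (vbar k r)) (ci s) = 0"
    using True bf_vbar0[of "2*k" k "ci s"] by (auto simp: bf_def ci_def)
  show ?thesis using True r s unfolding c0
    by (auto simp: fsub_def fscale_def)
next
  case False
  hence r0: "r \<noteq> (\<lambda>_. 0)" and s0: "s \<noteq> (\<lambda>_. 0)" by auto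
  have rs: "vadd r s \<in> Gam (2*k) m" using r s by (rule Gam_add)
  have sk: "bf (2*k) (ci (vbar k s)) (ci r) = - bf (2*k) (ci (vbar k r)) (ci s)" by (rule bf_skew)
  show ?thesis
  proof
    fix x
    define g where "g = f (vsub (vsub x r) s)"
    have eq: "\<rho> r (\<rho> s g) = \<rho> s (\<rho> r g) + scale (bf (2*k) (ci (vbar k r)) (ci s)) (\<rho> (vadd r s) g - \<rho> r g - \<rho> s g)"
      using comm[OF r s, of g] by (simp add: algebra_simps)
    have lhs: "fsub (hact scale k \<rho> \<beta> r (hact scale k \<rho> \<beta> s f)) (hact scale k \<rho> \<beta> s (hact scale k \<rho> \<beta> r f)) x
       = scale (bf (2*k) (ci (vbar k r)) (ci s)) (\<rho> (vadd r s) g + scale (bf (2*k) (ci (vbar k (vadd r s))) (\<lambda>i. \<beta> i + of_int (vsub (vsub x r) s i))) g)"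
      unfolding fsub_def hact_ne[OF r0] hact_ne[OF s0] g_def[symmetric]
      apply (simp add: vsub_vsub_comm g_def[symmetric] lin[OF r] lin[OF s] lins[OF r] lins[OF s] eq sk)
      apply (simp add: algebra_simps)
      done
    show "fsub (hact scale k \<rho> \<beta> r (hact scale k \<rho> \<beta> s f)) (hact scale k \<rho> \<beta> s (hact scale k \<rho> \<beta> r f)) x
       = fscale scale (bf (2*k) (ci (vbar k r)) (ci s)) (hact scale k \<rho> \<beta> (vadd r s) f) x"
    proof (cases "vadd r s = (\<lambda>_. 0)")
      case True
      then show ?thesis unfolding lhs by (simp add: rho0 fscale_def del: bf_plus bf_vsub bf_vbar_add)
    next
      case False
      then show ?thesis unfolding lhs by (simp add: fscale_def hact_ne vsub_vadd g_def del: bf_plus bf_vsub bf_vbar_add)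
    qed
  qed
qed

lemma supp_shift: "{s. f (vsub s r) \<noteq> 0} = (\<lambda>t. vadd t r) ` {t. f t \<noteq> 0}"
proof -
  have "\<And>s. s = vadd (vsub s r) r" "\<And>t. vsub (vadd t r) r = t" by (auto simp: vsub_def vadd_def)
  thus ?thesis by (auto intro: image_eqI)
qed

lemma LW_shift: assumes f: "f \<in> LW (2*k) m" and r: "r \<in> Gam (2*k) m"
  and sub: "{s. g s \<noteq> 0} \<subseteq> {s. f (vsub s r) \<noteq> 0}"
  shows "g \<in> LW (2*k) m"
proof -
  have fin: "finite {s. f (vsub s r) \<noteq> 0}" using f unfolding supp_shift LW_def by auto
  have "{s. f (vsub s r) \<noteq> 0} \<subseteq> Gam (2*k) m"
    using f r unfolding supp_shift LW_def by (auto intro: Gam_add)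
  thus ?thesis using fin sub unfolding LW_def by (auto intro: finite_subset)
qed

lemma lin_T: assumes r: "r \<in> Gam (2*k) m" shows "lin_op scale (LW (2*k) m) (tact r)"
  unfolding lin_op_def
proof (intro conjI ballI allI)
  fix f :: "(nat \<Rightarrow> int) \<Rightarrow> 'w" assume "f \<in> LW (2*k) m"
  thus "tact r f \<in> LW (2*k) m" by (rule LW_shift[OF _ r]) (auto simp: tact_def)
qed (auto simp: tact_def fadd_def fscale_def)

lemma lin_D: shows "lin_op scale (LW (2*k) m) (dact scale n \<alpha> u)"
  unfolding lin_op_def
proof (intro conjI ballI allI)
  fix f :: "(nat \<Rightarrow> int) \<Rightarrow> 'w" assume f: "f \<in> LW (2*k) m"
  show "dact scale n \<alpha> u f \<in> LW (2*k) m"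
    by (rule LW_shift[OF f Gam_0]) (auto simp: dact_def vsub_def)
qed (auto simp: dact_def fadd_def fscale_def scale_right_distrib scale_left_commute)

lemma lin_H: assumes r: "r \<in> Gam (2*k) m" shows "lin_op scale (LW (2*k) m) (hact scale k \<rho> \<beta> r)"
  unfolding lin_op_def
proof (intro conjI ballI allI)
  fix f :: "(nat \<Rightarrow> int) \<Rightarrow> 'w" assume f: "f \<in> LW (2*k) m"
  show "hact scale k \<rho> \<beta> r f \<in> LW (2*k) m"
    by (rule LW_shift[OF f r]) (auto simp: hact_def r)
qed (auto simp: hact_def fadd_def fscale_def lin[OF r] lins[OF r] scale_right_distrib scale_left_commute)

lemma TT: "tact r (tact s f) = tact s (tact r f)"
  by (auto simp: tact_def vsub_vsub_comm)

lemma DT: assumes "i < 2*k"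
  shows "fsub (dact scale (2*k) \<alpha> (unitv i) (tact s f)) (tact s (dact scale (2*k) \<alpha> (unitv i) f))
    = fscale scale (of_int (s i)) (tact s f)"
  unfolding fsub_def fscale_def dact_def tact_def bf_unitv[OF assms]
  by (auto simp: vsub_def algebra_simps)

lemma HT: assumes r: "r \<in> Gam (2*k) m"
  shows "fsub (hact scale k \<rho> \<beta> r (tact s f)) (tact s (hact scale k \<rho> \<beta> r f))
    = fscale scale (bf (2*k) (ci (vbar k r)) (ci s)) (tact (vadd r s) f)"
proof (cases "r = (\<lambda>_. 0)")
  case True
  then show ?thesis using bf_vbar0[of "2*k" k "ci s"] by (auto simp: fsub_def fscale_def tact_def)
next
  case False
  show ?thesis
    by (auto simp: fsub_def fscale_def hact_ne[OF False] tact_def vsub_vsub_comm vsub_vadd algebra_simps)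
qed

lemma DD: "dact scale n \<alpha> u (dact scale n \<alpha> v f) = dact scale n \<alpha> v (dact scale n \<alpha> u f)"
  by (auto simp: dact_def scale_left_commute)

lemma DH: assumes r: "r \<in> Gam (2*k) m" and i: "i < 2*k"
  shows "fsub (dact scale (2*k) \<alpha> (unitv i) (hact scale k \<rho> \<beta> r f)) (hact scale k \<rho> \<beta> r (dact scale (2*k) \<alpha> (unitv i) f))
    = fscale scale (of_int (r i)) (hact scale k \<rho> \<beta> r f)"
proof (cases "r = (\<lambda>_. 0)")
  case True
  then show ?thesis by (auto simp: fsub_def fscale_def dact_def)
next
  case False
  show ?thesis
    unfolding fsub_def fscale_def hact_ne[OF False] dact_def bf_unitv[OF i]
    by (auto simp: lins[OF r] lin[OF r] rdiff[OF r] vsub_def algebra_simps simp del: bf_plus bf_vsub)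
qed

lemma AHmod: "AH_module k m scale \<rho> \<alpha> \<beta>"
  unfolding AH_module_def Let_def
  by (intro conjI ballI allI impI; (rule lin_T lin_D lin_H TT DT HT DD DH HH | assumption)+)

definition sg :: "(nat \<Rightarrow> int) \<Rightarrow> 'w \<Rightarrow> ((nat \<Rightarrow> int) \<Rightarrow> 'w)" where
  "sg s w = (\<lambda>x. if x = s then w else 0)"

lemma tact_sg: "tact r (sg s w) = sg (vadd s r) w"
proof -
  have "\<And>x. (vsub x r = s) = (x = vadd s r)" by (auto simp: vsub_def vadd_def)
  thus ?thesis by (auto simp: tact_def sg_def)
qed

lemma sg_in_LW: "s \<in> Gam (2*k) m \<Longrightarrow> sg s w \<in> LW (2*k) m"
  unfolding LW_def sg_def by (auto intro: finite_subset[of _ "{s}"])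

lemma irr_AH: assumes irr: "irreducible_Hp k m scale \<rho>"
  shows "irreducible_AH k m scale \<rho> \<alpha> \<beta>"
  unfolding irreducible_AH_def Let_def
proof (intro conjI allI impI)
  have "\<exists>w::'w. w \<noteq> 0" using irr unfolding irreducible_Hp_def by (rule conjunct1)
  then obtain w0 :: 'w where w0: "w0 \<noteq> 0" by blast
  have "sg (\<lambda>_. 0) w0 \<in> LW (2*k) m" by (rule sg_in_LW[OF Gam_0])
  moreover have "sg (\<lambda>_. 0) w0 \<noteq> (\<lambda>_. 0)" using w0 by (auto simp: sg_def fun_eq_iff)
  ultimately show "LW (2*k) m \<noteq> {(\<lambda>_. 0) :: (nat \<Rightarrow> int) \<Rightarrow> 'w}"
  proof (intro notI)
    assume a: "sg (\<lambda>_. 0) w0 \<in> LW (2*k) m" "sg (\<lambda>_. 0) w0 \<noteq> (\<lambda>_. 0)" and eq: "LW (2*k) m = {(\<lambda>_. 0) :: (nat \<Rightarrow> int) \<Rightarrow> 'w}"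
    from a(1) have "sg (\<lambda>_. 0) w0 = (\<lambda>_. 0)" using eq by blast
    with a(2) show False by simp
  qed
next
  fix U :: "((nat \<Rightarrow> int) \<Rightarrow> 'w) set"
  let ?G = "Gam (2*k) m"
  let ?C = "LW (2*k) m"
  let ?z = "(\<lambda>_. 0) :: (nat \<Rightarrow> int) \<Rightarrow> 'w"
  assume H: "U \<subseteq> ?C \<and> ?z \<in> U \<and> (\<forall>f\<in>U. \<forall>g\<in>U. fadd f g \<in> U) \<and>
           (\<forall>c. \<forall>f\<in>U. fscale scale c f \<in> U) \<and>
           (\<forall>r\<in>?G. tact r ` U \<subseteq> U) \<and>
           (\<forall>i<2*k. dact scale (2*k) \<alpha> (unitv i) ` U \<subseteq> U) \<and>
           (\<forall>r\<in>?G. hact scale k \<rho> \<beta> r ` U \<subseteq> U)"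
  note H2 = H[THEN conjunct2] and H3 = H[THEN conjunct2, THEN conjunct2]
  note H4 = H3[THEN conjunct2] and H5 = H3[THEN conjunct2, THEN conjunct2]
  note H6 = H5[THEN conjunct2] and H7 = H5[THEN conjunct2, THEN conjunct2]
  have UC: "U \<subseteq> ?C" by (rule H[THEN conjunct1])
  have Uz: "?z \<in> U" by (rule H2[THEN conjunct1])
  have Uadd0: "\<forall>f\<in>U. \<forall>g\<in>U. fadd f g \<in> U" by (rule H3[THEN conjunct1])
  have Usc0: "\<forall>c. \<forall>f\<in>U. fscale scale c f \<in> U" by (rule H4[THEN conjunct1])
  have UT0: "\<forall>r\<in>?G. tact r ` U \<subseteq> U" by (rule H5[THEN conjunct1])
  have UD0: "\<forall>i<2*k. dact scale (2*k) \<alpha> (unitv i) ` U \<subseteq> U" by (rule H6[THEN conjunct1])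
  have UH0: "\<forall>r\<in>?G. hact scale k \<rho> \<beta> r ` U \<subseteq> U" by (rule H7)
  have Uadd: "\<And>f g. f \<in> U \<Longrightarrow> g \<in> U \<Longrightarrow> fadd f g \<in> U" using Uadd0 by blast
  have Usc: "\<And>c f. f \<in> U \<Longrightarrow> fscale scale c f \<in> U" using Usc0 by blast
  have UT: "\<And>r f. r \<in> ?G \<Longrightarrow> f \<in> U \<Longrightarrow> tact r f \<in> U" using UT0 by blast
  have UD: "\<And>i f. i < 2*k \<Longrightarrow> f \<in> U \<Longrightarrow> dact scale (2*k) \<alpha> (unitv i) f \<in> U" using UD0 by blast
  have UH: "\<And>r f. r \<in> ?G \<Longrightarrow> f \<in> U \<Longrightarrow> hact scale k \<rho> \<beta> r f \<in> U" using UH0 by blast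
  show "U = {?z} \<or> U = ?C"
  proof (cases "U = {?z}")
    case True thus ?thesis by simp
  next
    case False
    then obtain f0 where f0: "f0 \<in> U" "f0 \<noteq> ?z" using Uz by blast
    have red: "\<And>f. f \<in> U \<Longrightarrow> f \<noteq> ?z \<Longrightarrow> card {s. f s \<noteq> 0} = N \<Longrightarrow>
       \<exists>s w. s \<in> ?G \<and> w \<noteq> 0 \<and> sg s w \<in> U" for N
    proof (induction N rule: less_induct)
      case (less N f)
      define S where "S = {s. f s \<noteq> 0}"
      have finS: "finite S" and SG: "S \<subseteq> ?G" using less.prems(1) UC unfolding S_def LW_def by auto
      obtain s1 where s1: "s1 \<in> S" using less.prems(2) unfolding S_def by (auto simp: fun_eq_iff)
      show ?case
      proof (cases "S - {s1} = {}")
        case True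
        hence "f = sg s1 (f s1)" by (intro ext) (auto simp: sg_def S_def)
        moreover have "s1 \<in> ?G" "f s1 \<noteq> 0" using s1 SG unfolding S_def by auto
        ultimately show ?thesis using less.prems(1) by metis
      next
        case False
        then obtain s0 where s0: "s0 \<in> S" "s0 \<noteq> s1" by auto
        have "\<exists>i<2*k. s0 i \<noteq> s1 i"
        proof (rule ccontr)
          assume "\<not> ?thesis"
          moreover have "\<forall>i\<ge>2*k. s0 i = 0 \<and> s1 i = 0" using s0 s1 SG unfolding Gam_def by auto
          ultimately have "s0 = s1" by (metis not_le ext)
          thus False using s0 by simp
        qed
        then obtain i where i: "i < 2*k" "s0 i \<noteq> s1 i" by auto
        define g where "g = fadd (dact scale (2*k) \<alpha> (unitv i) f) (fscale scale (-(\<alpha> i + of_int (s1 i))) f)"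
        have gU: "g \<in> U" unfolding g_def by (intro Uadd Usc UD i less.prems(1))
        have gx: "g x = scale (of_int (x i) - of_int (s1 i)) (f x)" for x
          unfolding g_def fadd_def fscale_def dact_def bf_unitv[OF i(1)]
          by (simp add: algebra_simps)
        have sub: "{x. g x \<noteq> 0} \<subset> S"
        proof -
          have "{x. g x \<noteq> 0} \<subseteq> S - {s1}" by (auto simp: gx S_def)
          thus ?thesis using s1 by auto
        qed
        have "card {x. g x \<noteq> 0} < N" using psubset_card_mono[OF finS sub] less.prems(3) S_def by simp
        moreover have "g \<noteq> ?z"
        proof
          assume "g = ?z"
          hence "g s0 = 0" by simp
          thus False using i(2) s0(1) by (simp add: gx S_def)
        qed
        ultimately show ?thesis using less.IH gU by blast
      qed
    qed
    obtain s1 w1 where sw1: "s1 \<in> ?G" "w1 \<noteq> 0" "sg s1 w1 \<in> U" using red[OF f0] by blast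
    let ?U0 = "{w. sg (\<lambda>_. 0) w \<in> U}"
    have "sg (vadd s1 (\<lambda>i. - s1 i)) w1 \<in> U"
      using UT[OF Gam_neg[OF sw1(1)] sw1(3)] by (simp add: tact_sg)
    moreover have "vadd s1 (\<lambda>i. - s1 i) = (\<lambda>_. 0)" by (auto simp: vadd_def)
    ultimately have w1U0: "w1 \<in> ?U0" by simp
    have sg_add: "fadd (sg s a) (sg s b) = sg s (a + b)" for s a b by (auto simp: fadd_def sg_def)
    have sg_sc: "fscale scale c (sg s a) = sg s (scale c a)" for s c a by (auto simp: fscale_def sg_def)
    have sub0: "subspace ?U0"
      unfolding subspace_def
    proof (intro conjI ballI allI)
      show "0 \<in> ?U0" using Uz by (simp add: sg_def)
    next
      fix x y assume "x \<in> ?U0" "y \<in> ?U0"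
      thus "x + y \<in> ?U0" using Uadd sg_add by fastforce
    next
      fix c x assume "x \<in> ?U0"
      thus "scale c x \<in> ?U0" using Usc sg_sc by fastforce
    qed
    have inv0: "\<forall>r\<in>?G. \<rho> r ` ?U0 \<subseteq> ?U0"
    proof (intro ballI subsetI)
      fix r y assume r: "r \<in> ?G" and "y \<in> \<rho> r ` ?U0"
      then obtain w where w: "w \<in> ?U0" and y: "y = \<rho> r w" by auto
      show "y \<in> ?U0"
      proof (cases "r = (\<lambda>_. 0)")
        case True thus ?thesis using y rho0 Uz by (simp add: sg_def)
      next
        case False
        define c where "c = bf (2*k) (ci (vbar k r)) (\<lambda>i. \<beta> i + of_int (vsub r r i))"
        have "hact scale k \<rho> \<beta> r (sg (\<lambda>_. 0) w) = sg r (\<rho> r w + scale c w)"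
        proof
          fix x
          have "(vsub x r = (\<lambda>_. 0)) = (x = r)" by (auto simp: vsub_def fun_eq_iff)
          thus "hact scale k \<rho> \<beta> r (sg (\<lambda>_. 0) w) x = sg r (\<rho> r w + scale c w) x"
            unfolding hact_ne[OF False] using r by (auto simp: sg_def c_def simp del: bf_plus bf_vsub)
        qed
        hence "sg r (\<rho> r w + scale c w) \<in> U" using UH[OF r w[simplified]] by simp
        hence "tact (\<lambda>i. - r i) (sg r (\<rho> r w + scale c w)) \<in> U" by (rule UT[OF Gam_neg[OF r]])
        moreover have "vadd r (\<lambda>i. - r i) = (\<lambda>_. 0)" by (auto simp: vadd_def)
        ultimately have "sg (\<lambda>_. 0) (\<rho> r w + scale c w) \<in> U" by (simp add: tact_sg)
        moreover have "sg (\<lambda>_. 0) (scale (-c) w) \<in> U" using Usc[OF w[simplified], of "-c"] sg_sc by simp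
        ultimately have "fadd (sg (\<lambda>_. 0) (\<rho> r w + scale c w)) (sg (\<lambda>_. 0) (scale (-c) w)) \<in> U"
          by (rule Uadd)
        thus ?thesis using y by (simp add: sg_add)
      qed
    qed
    have irrU: "\<forall>U. subspace U \<and> (\<forall>r\<in>?G. \<rho> r ` U \<subseteq> U) \<longrightarrow> U = {0} \<or> U = UNIV"
      using irr unfolding irreducible_Hp_def by blast
    have "?U0 = {0} \<or> ?U0 = UNIV" using irrU[rule_format, OF conjI[OF sub0 inv0]] .
    hence all0: "?U0 = UNIV" using w1U0 sw1(2) by auto
    have sgU: "s \<in> ?G \<Longrightarrow> sg s w \<in> U" for s w
    proof -
      assume s: "s \<in> ?G"
      have "sg (\<lambda>_. 0) w \<in> U" using all0 by auto
      hence "tact s (sg (\<lambda>_. 0) w) \<in> U" by (rule UT[OF s])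
      moreover have "vadd (\<lambda>_. 0) s = s" by (auto simp: vadd_def)
      ultimately show ?thesis by (simp add: tact_sg)
    qed
    have fin_ind: "finite S \<Longrightarrow> S \<subseteq> ?G \<Longrightarrow> \<forall>f. {s. f s \<noteq> 0} \<subseteq> S \<longrightarrow> f \<in> U" for S
    proof (induction S rule: finite_induct)
      case empty
      then show ?case using Uz by (auto simp: fun_eq_iff)
    next
      case (insert a S)
      show ?case
      proof (intro allI impI)
        fix f :: "(nat \<Rightarrow> int) \<Rightarrow> 'w" assume fs: "{s. f s \<noteq> 0} \<subseteq> insert a S"
        have "{s. (f(a := 0)) s \<noteq> 0} \<subseteq> S" using fs by auto
        moreover have "S \<subseteq> ?G" "a \<in> ?G" using insert.prems by auto
        ultimately have "f(a := 0) \<in> U" using insert.IH by blast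
        moreover have "sg a (f a) \<in> U" using sgU \<open>a \<in> ?G\<close> by blast
        ultimately have "fadd (sg a (f a)) (f(a := 0)) \<in> U" by (rule Uadd[rotated])
        moreover have "fadd (sg a (f a)) (f(a := 0)) = f" by (auto simp: fadd_def sg_def)
        ultimately show "f \<in> U" by simp
      qed
    qed
    have "?C \<subseteq> U"
    proof
      fix f :: "(nat \<Rightarrow> int) \<Rightarrow> 'w" assume "f \<in> ?C"
      thus "f \<in> U" using fin_ind[of "{s. f s \<noteq> 0}"] unfolding LW_def by auto
    qed
    thus ?thesis using UC by auto
  qed
qed

end

theorem lemma6p2:
  fixes k :: nat and m :: "nat \<Rightarrow> int"
    and scale :: "complex \<Rightarrow> 'w::ab_group_add \<Rightarrow> 'w"
    and \<rho> :: "(nat \<Rightarrow> int) \<Rightarrow> 'w \<Rightarrow> 'w"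
    and \<alpha> \<beta> :: "nat \<Rightarrow> complex"
  assumes "0 < k"
    and "\<forall>i<2*k. 0 < m i"
    and "Hprime_module k m scale \<rho>"
    and "finite_dim scale"
    and "irreducible_Hp k m scale \<rho>"
  shows "AH_module k m scale \<rho> \<alpha> \<beta> \<and> irreducible_AH k m scale \<rho> \<alpha> \<beta>"
proof -
  have H: "vector_space scale" "\<And>r. r \<in> Gam (2*k) m \<Longrightarrow> Vector_Spaces.linear scale scale (\<rho> r)"
    "\<rho> (\<lambda>_. 0) = (\<lambda>_. 0)"
    "\<And>r s w. r \<in> Gam (2*k) m \<Longrightarrow> s \<in> Gam (2*k) m \<Longrightarrow>
        \<rho> r (\<rho> s w) - \<rho> s (\<rho> r w) =
        scale (bf (2*k) (ci (vbar k r)) (ci s)) (\<rho> (vadd r s) w - \<rho> r w - \<rho> s w)"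
    using assms(3) unfolding Hprime_module_def by blast+
  have hs: "hset scale k m \<rho>"
  proof (rule hset.intro)
    show "cvs scale" by (rule cvs.intro[OF H(1)])
  next
    show "hset_axioms scale k m \<rho>"
  proof (rule hset_axioms.intro)
    fix r x y assume r: "r \<in> Gam (2*k) m"
    show "\<rho> r (x + y) = \<rho> r x + \<rho> r y"
      using module_hom.add[OF linear_iff_module_hom[THEN iffD1, OF H(2)[OF r]]] .
  next
    fix r c x assume r: "r \<in> Gam (2*k) m"
    show "\<rho> r (scale c x) = scale c (\<rho> r x)"
      using module_hom.scale[OF linear_iff_module_hom[THEN iffD1, OF H(2)[OF r]]] .
  qed (use H in auto)
  qed
  interpret hset scale k m \<rho> by (rule hs)
  show ?thesis using AHmod irr_AH[OF assms(5)] by blast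
qed

end
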